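(* For every cap-cup cycle $c$ with $T(c) = \pm 2$, there exists a knot diagram $f \in \mathbb{CC}$ whose string diagram has no crossings (braidings) and such that $\mathrm{ccc}(f) = c$.
   Context: $\mathbb{CC}$ is the free (strict) braided monoidal category generated by objects $\uparrow, \downarrow$ and four generating morphisms, with no equations imposed between them: caps $\mathrm{cap}_r : I \to \uparrow \otimes \downarrow$, $\mathrm{cap}_l : I \to \downarrow \otimes \uparrow$ and cups $\mathrm{cup}_r : \downarrow \otimes \uparrow \to I$, $\mathrm{cup}_l : \uparrow \otimes \downarrow \to I$. Wires labelled $\uparrow$ / $\downarrow$ are regarded as oriented (upwards/downwards), so a morphism is an oriented diagram. A knot (diagram) in $\mathbb{CC}$ is a morphism $I \to I$ whose string diagram has a single connected component. The turning numbers of the generators are $t(\mathrm{cap}_r) = +1$, $t(\mathrm{cap}_l) = -1$, $t(\mathrm{cup}_r) = -1$, $t(\mathrm{cup}_l) = +1$. A cap-cup cycle is a finite sequence of elements of $\{\mathrm{cap}_l, \mathrm{cap}_r, \mathrm{cup}_l, \mathrm{cup}_r\}$, considered up to cyclic permutation, in which caps and cups alternate; its turning number $T(c)$ is the sum of the turning numbers of its elements. For a knot $f \in \mathbb{CC}$, its cap-cup cycle $\mathrm{ccc}(f)$ is obtained by starting at any point of the strand, following the strand in the direction given by its orientation, and recording the caps and cups encountered until returning to the start. *)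

theory Defs
  imports Main
begin

text \<open>Generators of CC other than the braiding.  Objects of CC are words in
  up/down; we encode them as bool lists, True = up-arrow, False = down-arrow.\<close>

datatype gen = CapL | CapR | CupL | CupR

fun is_cap :: "gen \<Rightarrow> bool" where
  "is_cap CapL = True" | "is_cap CapR = True" | "is_cap CupL = False" | "is_cap CupR = False"

fun gdom :: "gen \<Rightarrow> bool list" where
  "gdom CapL = []" | "gdom CapR = []" | "gdom CupL = [True, False]" | "gdom CupR = [False, True]"

fun gcod :: "gen \<Rightarrow> bool list" where
  "gcod CapL = [False, True]" | "gcod CapR = [True, False]" | "gcod CupL = []" | "gcod CupR = []"

fun turn :: "gen \<Rightarrow> int" where
  "turn CapR = 1" | "turn CapL = -1" | "turn CupR = -1" | "turn CupL = 1"

text \<open>Cap-cup cycles (as representative lists; equality is up to rotation) and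
  their turning number.  Alternation is required cyclically.\<close>

definition cap_cup_cycle :: "gen list \<Rightarrow> bool" where
  "cap_cup_cycle c \<longleftrightarrow>
     (\<forall>i < length c. is_cap (c ! i) \<longleftrightarrow> \<not> is_cap (c ! ((i + 1) mod length c)))"

definition T :: "gen list \<Rightarrow> int" where
  "T c = sum_list (map turn c)"

text \<open>A crossing-free morphism of CC is a composite of layers
  id_w1 (x) g (x) id_w2 with g a cap/cup; a layer is recorded as (length w1, g).
  A diagram is a list of layers, read bottom to top.\<close>

type_synonym layer = "nat \<times> gen"

fun apply_layer :: "layer \<Rightarrow> bool list \<Rightarrow> bool list option" where
  "apply_layer (k, g) w =
     (if k + length (gdom g) \<le> length w \<and> take (length (gdom g)) (drop k w) = gdom g
      then Some (take k w @ gcod g @ drop (k + length (gdom g)) w) else None)"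

fun apply_diag :: "layer list \<Rightarrow> bool list \<Rightarrow> bool list option" where
  "apply_diag [] w = Some w"
| "apply_diag (l # ls) w = (case apply_layer l w of None \<Rightarrow> None | Some w' \<Rightarrow> apply_diag ls w')"

definition endo_I :: "layer list \<Rightarrow> bool" where
  "endo_I d \<longleftrightarrow> apply_diag d [] = Some []"

text \<open>Following a wire (at position p) through a list of layers until it hits a
  generator that absorbs it (cups when travelling upwards, caps when travelling
  downwards); returns the number of layers passed before hitting it.\<close>

fun trace :: "(gen \<Rightarrow> bool) \<Rightarrow> layer list \<Rightarrow> nat \<Rightarrow> nat option" where
  "trace absorbs [] p = None"
| "trace absorbs ((k, g) # ls) p =
     (if absorbs g then
        (if p = k \<or> p = k + 1 then Some 0
         else map_option Suc (trace absorbs ls (if p > k + 1 then p - 2 else p)))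
      else map_option Suc (trace absorbs ls (if p \<ge> k then p + 2 else p)))"

text \<open>Following the orientation of the strand: from a cap the strand leaves along
  its up-oriented leg (upwards); from a cup it leaves along its down-oriented leg
  (downwards).  next_gen d i is the layer of the next cap/cup met.\<close>

definition next_gen :: "layer list \<Rightarrow> nat \<Rightarrow> nat" where
  "next_gen d i = (case d ! i of (k, g) \<Rightarrow>
     (case g of
        CapR \<Rightarrow> i + 1 + the (trace (\<lambda>h. \<not> is_cap h) (drop (i + 1) d) k)
      | CapL \<Rightarrow> i + 1 + the (trace (\<lambda>h. \<not> is_cap h) (drop (i + 1) d) (k + 1))
      | CupR \<Rightarrow> i - 1 - the (trace is_cap (rev (take i d)) k)
      | CupL \<Rightarrow> i - 1 - the (trace is_cap (rev (take i d)) (k + 1))))"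

definition knot :: "layer list \<Rightarrow> bool" where
  "knot d \<longleftrightarrow> endo_I d \<and> d \<noteq> [] \<and>
     (\<forall>j < length d. \<exists>m. (next_gen d ^^ m) 0 = j)"

definition ccc_list :: "layer list \<Rightarrow> gen list" where
  "ccc_list d = map (\<lambda>m. snd (d ! ((next_gen d ^^ m) 0))) [0..<length d]"

definition ccc_eq :: "layer list \<Rightarrow> gen list \<Rightarrow> bool" where
  "ccc_eq d c \<longleftrightarrow> (\<exists>r. rotate r (ccc_list d) = c)"

end

theory Submission
  imports Defs
begin

fun tpos :: "(gen \<Rightarrow> bool) \<Rightarrow> layer list \<Rightarrow> nat \<Rightarrow> nat" where
  "tpos ab [] p = p"
| "tpos ab ((k, g) # ls) p =
     (if ab g then tpos ab ls (if p > k + 1 then p - 2 else p)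
      else tpos ab ls (if p \<ge> k then p + 2 else p))"

lemma trace_append:
  "trace ab (xs @ ys) p = (case trace ab xs p of Some n \<Rightarrow> Some n
     | None \<Rightarrow> map_option (\<lambda>n. length xs + n) (trace ab ys (tpos ab xs p)))"
  by (induction ab xs p rule: trace.induct) (auto split: option.splits simp: map_option_case)

lemma tpos_append: "tpos ab (xs @ ys) p = tpos ab ys (tpos ab xs p)"
  by (induction ab xs p rule: tpos.induct) auto

lemma trace_less: "trace ab ls p = Some t \<Longrightarrow> t < length ls"
  by (induction ab ls p arbitrary: t rule: trace.induct) (auto split: if_splits)

lemma apply_diag_append:
  "apply_diag (xs @ ys) w = (case apply_diag xs w of None \<Rightarrow> None | Some w' \<Rightarrow> apply_diag ys w')"
  by (induction xs w rule: apply_diag.induct) (auto split: option.splits)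

fun uleg :: "layer \<Rightarrow> nat" where
  "uleg (k, CapR) = k" | "uleg (k, CapL) = k + 1" | "uleg (k, CupR) = 0" | "uleg (k, CupL) = 0"

fun dleg :: "layer \<Rightarrow> nat" where
  "dleg (k, CupR) = k" | "dleg (k, CupL) = k + 1" | "dleg (k, CapR) = 0" | "dleg (k, CapL) = 0"

abbreviation "upa \<equiv> (\<lambda>h. \<not> is_cap h)"

definition step :: "layer list \<Rightarrow> nat \<Rightarrow> nat option" where
  "step d i = (if is_cap (snd (d ! i))
     then map_option (\<lambda>t. i + 1 + t) (trace upa (drop (i + 1) d) (uleg (d ! i)))
     else map_option (\<lambda>t. i - 1 - t) (trace is_cap (rev (take i d)) (dleg (d ! i))))"

lemma step_next: "step d i = Some j \<Longrightarrow> next_gen d i = j"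
  unfolding step_def next_gen_def
  by (cases "d ! i"; cases "snd (d ! i)") (auto split: if_splits)

lemma step_shift:
  assumes "i < length A" "step A i = Some j"
  shows "step (B @ A @ C) (length B + i) = Some (length B + j)"
proof (cases "is_cap (snd (A ! i))")
  case True
  have d: "drop (length B + i + 1) (B @ A @ C) = drop (i + 1) A @ C"
    using assms(1) by simp
  from True assms show ?thesis
    unfolding step_def by (auto simp: nth_append d trace_append split: option.splits)
next
  case False
  have d: "take (length B + i) (B @ A @ C) = B @ take i A"
    using assms(1) by simp
  from False assms obtain t where t: "trace is_cap (rev (take i A)) (dleg (A ! i)) = Some t"
    and j: "j = i - 1 - t"
    unfolding step_def by auto
  have "t < i" using trace_less[OF t] assms(1) by simp
  with False assms t j show ?thesis
    unfolding step_def by (auto simp: nth_append d trace_append)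
qed

lemma step_exit:
  assumes "e < length A" "\<not> is_cap (snd (A ! e))"
    "trace is_cap (rev (take e A)) (dleg (A ! e)) = None"
  shows "step (B @ A @ C) (length B + e) =
    map_option (\<lambda>t. length B - 1 - t) (trace is_cap (rev B) (tpos is_cap (rev (take e A)) (dleg (A ! e))))"
proof -
  have d: "take (length B + e) (B @ A @ C) = B @ take e A"
    using assms(1) by simp
  from assms show ?thesis
    unfolding step_def by (auto simp: nth_append d trace_append map_option_case split: option.splits)
qed

definition arc_ok :: "layer list \<Rightarrow> nat \<Rightarrow> bool list \<Rightarrow> nat \<Rightarrow> nat \<Rightarrow> nat list \<Rightarrow> gen list \<Rightarrow> bool" where
  "arc_ok A b dw ein eout L s \<longleftrightarrow>
     (\<forall>u v. length u = b \<longrightarrow> apply_diag A (u @ dw @ v) = Some (u @ v)) \<and>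
     (\<forall>p. p < b \<longrightarrow> trace upa A p = None \<and> tpos upa A p = p) \<and>
     (\<forall>p. p > b + 1 \<longrightarrow> trace upa A p = None \<and> tpos upa A p = p - 2) \<and>
     (\<forall>p. trace is_cap (rev A) p = None \<and> tpos is_cap (rev A) p = (if p < b then p else p + 2)) \<and>
     length L = length A \<and> set L = {..<length A} \<and> L \<noteq> [] \<and>
     trace upa A ein = Some (hd L) \<and>
     successively (\<lambda>x y. step A x = Some y) L \<and>
     \<not> is_cap (snd (A ! last L)) \<and>
     trace is_cap (rev (take (last L) A)) (dleg (A ! last L)) = None \<and>
     tpos is_cap (rev (take (last L) A)) (dleg (A ! last L)) = eout \<and>
     map (\<lambda>i. snd (A ! i)) L = s"

lemma arc_base_plus: "arc_ok [(b, CupL)] b [True, False] b (b + 1) [0] [CupL]"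
  unfolding arc_ok_def by auto

lemma arc_base_minus: "arc_ok [(b, CupR)] b [False, True] (b + 1) b [0] [CupR]"
  unfolding arc_ok_def by auto

lemma succ_shift:
  assumes "successively (\<lambda>x y. step A x = Some y) L" "set L \<subseteq> {..<length A}"
  shows "successively (\<lambda>x y. step (B @ A @ C) x = Some y) (map ((+) (length B)) L)"
  unfolding successively_map
  by (rule successively_mono[OF assms(1)]) (use assms(2) step_shift in auto)

lemma map_shift:
  assumes "set L \<subseteq> {..<length A}"
  shows "map (\<lambda>i. snd ((B @ A @ C) ! i)) (map ((+) (length B)) L) = map (\<lambda>i. snd (A ! i)) L"
  using assms by (auto simp: nth_append)

lemma set_shift3:
  "((+) 1) ` {..<n1} \<union> {0} \<union> ((+) (Suc n1)) ` {..<n2} = {..<Suc (n1 + n2)}"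
proof -
  have "x \<in> ((+) 1) ` {..<n1} \<union> {0} \<union> ((+) (Suc n1)) ` {..<n2}" if "x < Suc (n1 + n2)" for x
  proof (cases "x = 0")
    case False
    show ?thesis
    proof (cases "x \<le> n1")
      case True
      then show ?thesis using False by (auto intro!: image_eqI[where x="x - 1"])
    next
      case False
      then show ?thesis using that by (auto intro!: image_eqI[where x="x - Suc n1"])
    qed
  qed simp
  then show ?thesis by auto
qed

lemma compose1:
  assumes a1: "arc_ok A1 b1 dw1 i1 e1 L1 s1" and a2: "arc_ok A2 b2 dw2 i2 e2 L2 s2"
    and g: "is_cap g"
    and Happ: "\<forall>u v. length u = b \<longrightarrow> apply_diag ((c, g) # A1 @ A2) (u @ dw @ v) = Some (u @ v)"
    and HT1: "\<forall>p. p < b \<longrightarrow> trace upa ((c, g) # A1 @ A2) p = None \<and> tpos upa ((c, g) # A1 @ A2) p = p"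
    and HT2: "\<forall>p. p > b + 1 \<longrightarrow> trace upa ((c, g) # A1 @ A2) p = None \<and> tpos upa ((c, g) # A1 @ A2) p = p - 2"
    and HD1: "\<forall>p. trace is_cap (rev ((c, g) # A1 @ A2)) p = None \<and>
                  tpos is_cap (rev ((c, g) # A1 @ A2)) p = (if p < b then p else p + 2)"
    and Hent: "trace upa ((c, g) # A1 @ A2) ein = Some (1 + hd L1)"
    and Hj: "trace is_cap [(c, g)] e1 = Some 0"
    and Hcap: "trace upa (A1 @ A2) (uleg (c, g)) = Some (length A1 + hd L2)"
    and Hex1: "trace is_cap (rev A1 @ [(c, g)]) e2 = None"
    and Hex2: "tpos is_cap (rev A1 @ [(c, g)]) e2 = eout"
  shows "arc_ok ((c, g) # A1 @ A2) b dw ein eout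
           (map ((+) 1) L1 @ [0] @ map ((+) (Suc (length A1))) L2) (s1 @ [g] @ s2)"
proof -
  let ?A = "(c, g) # A1 @ A2"
  let ?L = "map ((+) 1) L1 @ [0] @ map ((+) (Suc (length A1))) L2"
  have eqA1: "?A = [(c, g)] @ A1 @ A2" by simp
  have eqA2: "?A = ((c, g) # A1) @ A2 @ []" by simp
  from a1 have L1: "length L1 = length A1" "set L1 = {..<length A1}" "L1 \<noteq> []"
    "trace upa A1 i1 = Some (hd L1)" "successively (\<lambda>x y. step A1 x = Some y) L1"
    "\<not> is_cap (snd (A1 ! last L1))"
    "trace is_cap (rev (take (last L1) A1)) (dleg (A1 ! last L1)) = None"
    "tpos is_cap (rev (take (last L1) A1)) (dleg (A1 ! last L1)) = e1"
    "map (\<lambda>i. snd (A1 ! i)) L1 = s1"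
    unfolding arc_ok_def by auto
  from a2 have L2: "length L2 = length A2" "set L2 = {..<length A2}" "L2 \<noteq> []"
    "trace upa A2 i2 = Some (hd L2)" "successively (\<lambda>x y. step A2 x = Some y) L2"
    "\<not> is_cap (snd (A2 ! last L2))"
    "trace is_cap (rev (take (last L2) A2)) (dleg (A2 ! last L2)) = None"
    "tpos is_cap (rev (take (last L2) A2)) (dleg (A2 ! last L2)) = e2"
    "map (\<lambda>i. snd (A2 ! i)) L2 = s2"
    unfolding arc_ok_def by auto
  have lastL1: "last L1 < length A1" using L1 last_in_set[OF L1(3)] by auto
  have lastL2: "last L2 < length A2" using L2 last_in_set[OF L2(3)] by auto
  have len: "length ?L = length ?A" using L1 L2 by simp
  have setL: "set ?L = {..<length ?A}"
    using L1 L2 set_shift3[of "length A1" "length A2"] by (simp add: Un_commute Un_left_commute)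
  have hdL: "hd ?L = 1 + hd L1" using L1 by (cases L1) auto
  have lastL: "last ?L = Suc (length A1) + last L2" using L2 by (simp add: last_map)
  have s1: "successively (\<lambda>x y. step ?A x = Some y) (map ((+) 1) L1)"
    using succ_shift[OF L1(5), of "[(c, g)]" A2] L1(2) by simp
  have s2: "successively (\<lambda>x y. step ?A x = Some y) (map ((+) (Suc (length A1))) L2)"
    using succ_shift[OF L2(5), of "(c, g) # A1" "[]"] L2(2) by simp
  have j1: "step ?A (1 + last L1) = Some 0"
    using step_exit[OF lastL1 L1(6) L1(7), of "[(c, g)]" A2] L1(8) Hj by simp
  have j2: "step ?A 0 = Some (Suc (length A1) + hd L2)"
    using Hcap g unfolding step_def by simp
  have succ: "successively (\<lambda>x y. step ?A x = Some y) ?L"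
    using s1 s2 j1 j2 L1(3) L2(3) by (simp add: successively_append_iff successively_Cons last_map hd_map)
  have ex: "\<not> is_cap (snd (?A ! last ?L)) \<and>
     trace is_cap (rev (take (last ?L) ?A)) (dleg (?A ! last ?L)) = None \<and>
     tpos is_cap (rev (take (last ?L) ?A)) (dleg (?A ! last ?L)) = eout"
  proof -
    have t: "take (last ?L) ?A = ((c, g) # A1) @ take (last L2) A2" using lastL by simp
    have n: "?A ! last ?L = A2 ! last L2" using lastL by (simp add: nth_append)
    show ?thesis using L2(6,7,8) Hex1 Hex2 unfolding t n by (simp add: trace_append tpos_append)
  qed
  have mp: "map (\<lambda>i. snd (?A ! i)) ?L = s1 @ [g] @ s2"
  proof -
    have "map (\<lambda>i. snd (?A ! i)) (map ((+) 1) L1) = s1"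
      using map_shift[of L1 A1 "[(c, g)]" A2] L1(2,9) by simp
    moreover have "map (\<lambda>i. snd (?A ! i)) (map ((+) (Suc (length A1))) L2) = s2"
      using map_shift[of L2 A2 "(c, g) # A1" "[]"] L2(2,9) by simp
    ultimately show ?thesis by simp
  qed
  show ?thesis unfolding arc_ok_def
    using Happ HT1 HT2 HD1 Hent len setL hdL succ ex mp by simp
qed

lemma compose2:
  assumes a1: "arc_ok A1 b1 dw1 i1 e1 L1 s1" and a2: "arc_ok A2 b2 dw2 i2 e2 L2 s2"
    and g: "is_cap g"
    and Happ: "\<forall>u v. length u = b \<longrightarrow> apply_diag ((c, g) # A1 @ A2) (u @ dw @ v) = Some (u @ v)"
    and HT1: "\<forall>p. p < b \<longrightarrow> trace upa ((c, g) # A1 @ A2) p = None \<and> tpos upa ((c, g) # A1 @ A2) p = p"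
    and HT2: "\<forall>p. p > b + 1 \<longrightarrow> trace upa ((c, g) # A1 @ A2) p = None \<and> tpos upa ((c, g) # A1 @ A2) p = p - 2"
    and HD1: "\<forall>p. trace is_cap (rev ((c, g) # A1 @ A2)) p = None \<and>
                  tpos is_cap (rev ((c, g) # A1 @ A2)) p = (if p < b then p else p + 2)"
    and Hent: "trace upa ((c, g) # A1 @ A2) ein = Some (Suc (length A1) + hd L2)"
    and Hj: "trace is_cap (rev A1 @ [(c, g)]) e2 = Some (length A1)"
    and Hcap: "trace upa (A1 @ A2) (uleg (c, g)) = Some (hd L1)"
    and Hex1: "trace is_cap [(c, g)] e1 = None"
    and Hex2: "tpos is_cap [(c, g)] e1 = eout"
  shows "arc_ok ((c, g) # A1 @ A2) b dw ein eout
           (map ((+) (Suc (length A1))) L2 @ [0] @ map ((+) 1) L1) (s2 @ [g] @ s1)"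
proof -
  let ?A = "(c, g) # A1 @ A2"
  let ?L = "map ((+) (Suc (length A1))) L2 @ [0] @ map ((+) 1) L1"
  from a1 have L1: "length L1 = length A1" "set L1 = {..<length A1}" "L1 \<noteq> []"
    "trace upa A1 i1 = Some (hd L1)" "successively (\<lambda>x y. step A1 x = Some y) L1"
    "\<not> is_cap (snd (A1 ! last L1))"
    "trace is_cap (rev (take (last L1) A1)) (dleg (A1 ! last L1)) = None"
    "tpos is_cap (rev (take (last L1) A1)) (dleg (A1 ! last L1)) = e1"
    "map (\<lambda>i. snd (A1 ! i)) L1 = s1"
    unfolding arc_ok_def by auto
  from a2 have L2: "length L2 = length A2" "set L2 = {..<length A2}" "L2 \<noteq> []"
    "trace upa A2 i2 = Some (hd L2)" "successively (\<lambda>x y. step A2 x = Some y) L2"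
    "\<not> is_cap (snd (A2 ! last L2))"
    "trace is_cap (rev (take (last L2) A2)) (dleg (A2 ! last L2)) = None"
    "tpos is_cap (rev (take (last L2) A2)) (dleg (A2 ! last L2)) = e2"
    "map (\<lambda>i. snd (A2 ! i)) L2 = s2"
    unfolding arc_ok_def by auto
  have lastL1: "last L1 < length A1" using L1 last_in_set[OF L1(3)] by auto
  have lastL2: "last L2 < length A2" using L2 last_in_set[OF L2(3)] by auto
  have len: "length ?L = length ?A" using L1 L2 by simp
  have setL: "set ?L = {..<length ?A}"
    using L1 L2 set_shift3[of "length A1" "length A2"] by (simp add: Un_commute Un_left_commute)
  have hdL: "hd ?L = Suc (length A1) + hd L2" using L2 by (cases L2) auto
  have lastL: "last ?L = 1 + last L1" using L1 by (simp add: last_map)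
  have s1: "successively (\<lambda>x y. step ?A x = Some y) (map ((+) 1) L1)"
    using succ_shift[OF L1(5), of "[(c, g)]" A2] L1(2) by simp
  have s2: "successively (\<lambda>x y. step ?A x = Some y) (map ((+) (Suc (length A1))) L2)"
    using succ_shift[OF L2(5), of "(c, g) # A1" "[]"] L2(2) by simp
  have j1: "step ?A (Suc (length A1) + last L2) = Some 0"
    using step_exit[OF lastL2 L2(6) L2(7), of "(c, g) # A1" "[]"] L2(8) Hj by simp
  have j2: "step ?A 0 = Some (1 + hd L1)"
    using Hcap g unfolding step_def by simp
  have succ: "successively (\<lambda>x y. step ?A x = Some y) ?L"
    using s1 s2 j1 j2 L1(3) L2(3) by (simp add: successively_append_iff successively_Cons last_map hd_map)
  have ex: "\<not> is_cap (snd (?A ! last ?L)) \<and>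
     trace is_cap (rev (take (last ?L) ?A)) (dleg (?A ! last ?L)) = None \<and>
     tpos is_cap (rev (take (last ?L) ?A)) (dleg (?A ! last ?L)) = eout"
  proof -
    have t: "take (last ?L) ?A = [(c, g)] @ take (last L1) A1" using lastL lastL1 by simp
    have n: "?A ! last ?L = A1 ! last L1" using lastL lastL1 by (simp add: nth_append)
    show ?thesis using L1(6,7,8) Hex1 Hex2 unfolding t n by (simp add: trace_append tpos_append)
  qed
  have mp: "map (\<lambda>i. snd (?A ! i)) ?L = s2 @ [g] @ s1"
  proof -
    have "map (\<lambda>i. snd (?A ! i)) (map ((+) 1) L1) = s1"
      using map_shift[of L1 A1 "[(c, g)]" A2] L1(2,9) by simp
    moreover have "map (\<lambda>i. snd (?A ! i)) (map ((+) (Suc (length A1))) L2) = s2"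
      using map_shift[of L2 A2 "(c, g) # A1" "[]"] L2(2,9) by simp
    ultimately show ?thesis by simp
  qed
  show ?thesis unfolding arc_ok_def
    using Happ HT1 HT2 HD1 Hent len setL hdL succ ex mp by simp
qed

lemma arc_okD:
  assumes "arc_ok A b dw ein eout L s"
  shows "\<And>u v. length u = b \<Longrightarrow> apply_diag A (u @ dw @ v) = Some (u @ v)"
    "\<And>p. p < b \<Longrightarrow> trace upa A p = None" "\<And>p. p < b \<Longrightarrow> tpos upa A p = p"
    "\<And>p. p > b + 1 \<Longrightarrow> trace upa A p = None" "\<And>p. p > b + 1 \<Longrightarrow> tpos upa A p = p - 2"
    "\<And>p. trace is_cap (rev A) p = None"
    "\<And>p. tpos is_cap (rev A) p = (if p < b then p else p + 2)"
    "trace upa A ein = Some (hd L)"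
  using assms unfolding arc_ok_def by auto

lemma apply_diag_Cons:
  "apply_diag (l # ls) w = (case apply_layer l w of None \<Rightarrow> None | Some w' \<Rightarrow> apply_diag ls w')"
  by simp

lemma case_a:
  assumes a1: "arc_ok A1 b [True, False] b (b + 1) L1 s1"
    and a2: "arc_ok A2 b [True, False] b (b + 1) L2 s2"
  shows "\<exists>A L. arc_ok A b [True, False] b (b + 1) L (s1 @ [CapL] @ s2)"
proof -
  note d1 = arc_okD[OF a1] and d2 = arc_okD[OF a2]
  note e1 = d1(8)[simplified numeral_2_eq_2 numeral_3_eq_3 One_nat_def add_Suc_right add_0_right]
  note e2 = d2(8)[simplified numeral_2_eq_2 numeral_3_eq_3 One_nat_def add_Suc_right add_0_right]
  have "arc_ok ((b + 1, CapL) # A1 @ A2) b [True, False] b (b + 1)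
           (map ((+) 1) L1 @ [0] @ map ((+) (Suc (length A1))) L2) (s1 @ [CapL] @ s2)"
  proof (rule compose1[OF a1 a2])
    show "\<forall>u v. length u = b \<longrightarrow> apply_diag ((b + 1, CapL) # A1 @ A2) (u @ [True, False] @ v) = Some (u @ v)"
    proof (intro allI impI)
      fix u v :: "bool list" assume u: "length u = b"
      have 1: "apply_layer (b + 1, CapL) (u @ [True, False] @ v) = Some (u @ [True, False] @ ([True, False] @ v))"
        using u by simp
      show "apply_diag ((b + 1, CapL) # A1 @ A2) (u @ [True, False] @ v) = Some (u @ v)"
        unfolding apply_diag_Cons 1 using d1(1)[OF u, of "[True, False] @ v"] d2(1)[OF u, of v]
        by (simp add: apply_diag_append)
    qed
  qed (auto simp: d1 d2 trace_append tpos_append e1 e2)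
  then show ?thesis by blast
qed

lemma case_b:
  assumes a1: "arc_ok A1 (b + 1) [False, True] (b + 2) (b + 1) L1 s1"
    and a2: "arc_ok A2 b [True, False] b (b + 1) L2 s2"
  shows "\<exists>A L. arc_ok A b [True, False] b (b + 1) L (s1 @ [CapR] @ s2)"
proof -
  note d1 = arc_okD[OF a1] and d2 = arc_okD[OF a2]
  note e1 = d1(8)[simplified numeral_2_eq_2 numeral_3_eq_3 One_nat_def add_Suc_right add_0_right]
  note e2 = d2(8)[simplified numeral_2_eq_2 numeral_3_eq_3 One_nat_def add_Suc_right add_0_right]
  have "arc_ok ((b, CapR) # A1 @ A2) b [True, False] b (b + 1)
           (map ((+) 1) L1 @ [0] @ map ((+) (Suc (length A1))) L2) (s1 @ [CapR] @ s2)"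
  proof (rule compose1[OF a1 a2])
    show "\<forall>u v. length u = b \<longrightarrow> apply_diag ((b, CapR) # A1 @ A2) (u @ [True, False] @ v) = Some (u @ v)"
    proof (intro allI impI)
      fix u v :: "bool list" assume u: "length u = b"
      have 1: "apply_layer (b, CapR) (u @ [True, False] @ v) = Some ((u @ [True]) @ [False, True] @ ([False] @ v))"
        using u by simp
      show "apply_diag ((b, CapR) # A1 @ A2) (u @ [True, False] @ v) = Some (u @ v)"
        unfolding apply_diag_Cons 1 using d1(1)[of "u @ [True]" "[False] @ v"] d2(1)[OF u, of v] u
        by (simp add: apply_diag_append)
    qed
  qed (auto simp: d1 d2 trace_append tpos_append e1 e2)
  then show ?thesis by blast
qed

lemma case_c:
  assumes a1: "arc_ok A1 (b + 1) [False, True] (b + 2) (b + 1) L1 s2"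
    and a2: "arc_ok A2 b [True, False] b (b + 1) L2 s1"
  shows "\<exists>A L. arc_ok A b [True, False] b (b + 1) L (s1 @ [CapR] @ s2)"
proof -
  note d1 = arc_okD[OF a1] and d2 = arc_okD[OF a2]
  note e1 = d1(8)[simplified numeral_2_eq_2 numeral_3_eq_3 One_nat_def add_Suc_right add_0_right]
  note e2 = d2(8)[simplified numeral_2_eq_2 numeral_3_eq_3 One_nat_def add_Suc_right add_0_right]
  have "arc_ok ((b + 2, CapR) # A1 @ A2) b [True, False] b (b + 1)
           (map ((+) (Suc (length A1))) L2 @ [0] @ map ((+) 1) L1) (s1 @ [CapR] @ s2)"
  proof (rule compose2[OF a1 a2])
    show "\<forall>u v. length u = b \<longrightarrow> apply_diag ((b + 2, CapR) # A1 @ A2) (u @ [True, False] @ v) = Some (u @ v)"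
    proof (intro allI impI)
      fix u v :: "bool list" assume u: "length u = b"
      have 1: "apply_layer (b + 2, CapR) (u @ [True, False] @ v) = Some ((u @ [True]) @ [False, True] @ ([False] @ v))"
        using u by simp
      show "apply_diag ((b + 2, CapR) # A1 @ A2) (u @ [True, False] @ v) = Some (u @ v)"
        unfolding apply_diag_Cons 1 using d1(1)[of "u @ [True]" "[False] @ v"] d2(1)[OF u, of v] u
        by (simp add: apply_diag_append)
    qed
  qed (auto simp: d1 d2 trace_append tpos_append e1 e2)
  then show ?thesis by blast
qed

lemma case_a':
  assumes a1: "arc_ok A1 (b + 2) [False, True] (b + 3) (b + 2) L1 s1"
    and a2: "arc_ok A2 b [False, True] (b + 1) b L2 s2"
  shows "\<exists>A L. arc_ok A b [False, True] (b + 1) b L (s1 @ [CapR] @ s2)"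
proof -
  note d1 = arc_okD[OF a1] and d2 = arc_okD[OF a2]
  note e1 = d1(8)[simplified numeral_2_eq_2 numeral_3_eq_3 One_nat_def add_Suc_right add_0_right]
  note e2 = d2(8)[simplified numeral_2_eq_2 numeral_3_eq_3 One_nat_def add_Suc_right add_0_right]
  have "arc_ok ((b + 1, CapR) # A1 @ A2) b [False, True] (b + 1) b
           (map ((+) 1) L1 @ [0] @ map ((+) (Suc (length A1))) L2) (s1 @ [CapR] @ s2)"
  proof (rule compose1[OF a1 a2])
    show "\<forall>u v. length u = b \<longrightarrow> apply_diag ((b + 1, CapR) # A1 @ A2) (u @ [False, True] @ v) = Some (u @ v)"
    proof (intro allI impI)
      fix u v :: "bool list" assume u: "length u = b"
      have 1: "apply_layer (b + 1, CapR) (u @ [False, True] @ v) = Some ((u @ [False, True]) @ [False, True] @ v)"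
        using u by simp
      show "apply_diag ((b + 1, CapR) # A1 @ A2) (u @ [False, True] @ v) = Some (u @ v)"
        unfolding apply_diag_Cons 1 using d1(1)[of "u @ [False, True]" "v"] d2(1)[OF u, of v] u
        by (simp add: apply_diag_append)
    qed
  qed (auto simp: d1 d2 trace_append tpos_append e1 e2)
  then show ?thesis by blast
qed

lemma case_b':
  assumes a1: "arc_ok A1 (b + 1) [True, False] (b + 1) (b + 2) L1 s1"
    and a2: "arc_ok A2 b [False, True] (b + 1) b L2 s2"
  shows "\<exists>A L. arc_ok A b [False, True] (b + 1) b L (s1 @ [CapL] @ s2)"
proof -
  note d1 = arc_okD[OF a1] and d2 = arc_okD[OF a2]
  note e1 = d1(8)[simplified numeral_2_eq_2 numeral_3_eq_3 One_nat_def add_Suc_right add_0_right]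
  note e2 = d2(8)[simplified numeral_2_eq_2 numeral_3_eq_3 One_nat_def add_Suc_right add_0_right]
  have "arc_ok ((b + 2, CapL) # A1 @ A2) b [False, True] (b + 1) b
           (map ((+) 1) L1 @ [0] @ map ((+) (Suc (length A1))) L2) (s1 @ [CapL] @ s2)"
  proof (rule compose1[OF a1 a2])
    show "\<forall>u v. length u = b \<longrightarrow> apply_diag ((b + 2, CapL) # A1 @ A2) (u @ [False, True] @ v) = Some (u @ v)"
    proof (intro allI impI)
      fix u v :: "bool list" assume u: "length u = b"
      have 1: "apply_layer (b + 2, CapL) (u @ [False, True] @ v) = Some ((u @ [False]) @ [True, False] @ ([True] @ v))"
        using u by simp
      show "apply_diag ((b + 2, CapL) # A1 @ A2) (u @ [False, True] @ v) = Some (u @ v)"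
        unfolding apply_diag_Cons 1 using d1(1)[of "u @ [False]" "[True] @ v"] d2(1)[OF u, of v] u
        by (simp add: apply_diag_append)
    qed
  qed (auto simp: d1 d2 trace_append tpos_append e1 e2)
  then show ?thesis by blast
qed

lemma case_c':
  assumes a1: "arc_ok A1 (b + 1) [True, False] (b + 1) (b + 2) L1 s2"
    and a2: "arc_ok A2 b [False, True] (b + 1) b L2 s1"
  shows "\<exists>A L. arc_ok A b [False, True] (b + 1) b L (s1 @ [CapL] @ s2)"
proof -
  note d1 = arc_okD[OF a1] and d2 = arc_okD[OF a2]
  note e1 = d1(8)[simplified numeral_2_eq_2 numeral_3_eq_3 One_nat_def add_Suc_right add_0_right]
  note e2 = d2(8)[simplified numeral_2_eq_2 numeral_3_eq_3 One_nat_def add_Suc_right add_0_right]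
  have "arc_ok ((b, CapL) # A1 @ A2) b [False, True] (b + 1) b
           (map ((+) (Suc (length A1))) L2 @ [0] @ map ((+) 1) L1) (s1 @ [CapL] @ s2)"
  proof (rule compose2[OF a1 a2])
    show "\<forall>u v. length u = b \<longrightarrow> apply_diag ((b, CapL) # A1 @ A2) (u @ [False, True] @ v) = Some (u @ v)"
    proof (intro allI impI)
      fix u v :: "bool list" assume u: "length u = b"
      have 1: "apply_layer (b, CapL) (u @ [False, True] @ v) = Some ((u @ [False]) @ [True, False] @ ([True] @ v))"
        using u by simp
      show "apply_diag ((b, CapL) # A1 @ A2) (u @ [False, True] @ v) = Some (u @ v)"
        unfolding apply_diag_Cons 1 using d1(1)[of "u @ [False]" "[True] @ v"] d2(1)[OF u, of v] u
        by (simp add: apply_diag_append)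
    qed
  qed (auto simp: d1 d2 trace_append tpos_append e1 e2)
  then show ?thesis by blast
qed

definition arcseq :: "gen list \<Rightarrow> bool" where
  "arcseq s \<longleftrightarrow> odd (length s) \<and> (\<forall>i < length s. is_cap (s ! i) \<longleftrightarrow> odd i)"

lemma T_Nil[simp]: "T [] = 0" and T_Cons[simp]: "T (x # xs) = turn x + T xs"
  and T_append[simp]: "T (xs @ ys) = T xs + T ys"
  unfolding T_def by simp_all

lemma turn_cases: "turn g = 1 \<or> turn g = -1"
  by (cases g) auto

lemma T_par: "even (T xs + int (length xs))"
proof (induction xs)
  case (Cons x xs)
  have "T (x # xs) + int (length (x # xs)) = (turn x + 1) + (T xs + int (length xs))" by simp
  moreover have "even (turn x + 1)" using turn_cases[of x] by auto
  ultimately show ?case using Cons by simp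
qed simp

lemma S_step: "k < length s \<Longrightarrow> T (take (Suc k) s) = T (take k s) + turn (s ! k)"
  by (simp add: take_Suc_conv_app_nth)

lemma split_plus:
  assumes as: "arcseq s" and n3: "length s \<ge> 3" and Ts: "T s = 1"
  shows "\<exists>j. odd j \<and> j + 1 < length s \<and> (T (take j s) = 1 \<or> T (take j s) = -1)
            \<and> (T (drop (Suc j) s) = 1 \<or> T (drop (Suc j) s) = -1)"
proof -
  define n where "n = length s"
  have on: "odd n" using as unfolding arcseq_def n_def by simp
  have tot: "T (drop (Suc j) s) = 1 - T (take (Suc j) s)" for j
    using Ts append_take_drop_id[of "Suc j" s] T_append[of "take (Suc j) s" "drop (Suc j) s"] by simp
  have par: "odd (T (take k s))" if "odd k" "k \<le> n" for k
  proof -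
    have "even (T (take k s) + int k)" using T_par[of "take k s"] that n_def by simp
    then show ?thesis using that by simp
  qed
  show ?thesis
  proof (cases "\<exists>j. odd j \<and> j + 1 < n \<and> T (take j s) = 1")
    case True
    then obtain j where j: "odd j" "j + 1 < n" "T (take j s) = 1" by blast
    have "T (take (Suc j) s) = 1 + turn (s ! j)" using S_step[of j s] j n_def by simp
    then have "T (drop (Suc j) s) = - turn (s ! j)" using tot by simp
    then show ?thesis using j turn_cases[of "s ! j"] n_def by auto
  next
    case False
    have le: "k < n \<longrightarrow> T (take k s) \<le> 0" for k
    proof (induction k)
      case (Suc k)
      show ?case
      proof
        assume k: "Suc k < n"
        have st: "T (take (Suc k) s) = T (take k s) + turn (s ! k)" using S_step[of k s] k n_def by simp
        have ih: "T (take k s) \<le> 0" using Suc k by simp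
        show "T (take (Suc k) s) \<le> 0"
        proof (cases "odd (Suc k)")
          case True
          have "Suc k + 1 < n" using True k on by presburger
          then have "T (take (Suc k) s) \<noteq> 1" using False True by blast
          then show ?thesis using st ih turn_cases[of "s ! k"] by auto
        next
          case False
          then have "odd k" by simp
          then have "odd (T (take k s))" using par k by simp
          then have "T (take k s) \<noteq> 0" by auto
          then show ?thesis using st ih turn_cases[of "s ! k"] by auto
        qed
      qed
    qed simp
    define j where "j = n - 2"
    have n3': "n \<ge> 3" using n3 n_def by simp
    have j1: "odd j" using on n3' unfolding j_def by presburger
    have a: "T (take (Suc j) s) \<le> 0" using le[of "Suc j"] n3' j_def by simp
    have b: "T (take j s) \<le> 0" using le[of j] n3' j_def by simp
    have c: "T (take (Suc (Suc j)) s) = 1" using Ts n3' j_def n_def by simp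
    have sa: "T (take (Suc (Suc j)) s) = T (take (Suc j) s) + turn (s ! Suc j)"
      using S_step[of "Suc j" s] n3' j_def n_def by simp
    have sb: "T (take (Suc j) s) = T (take j s) + turn (s ! j)"
      using S_step[of j s] n3' j_def n_def by simp
    have a0: "T (take (Suc j) s) = 0" using a c sa turn_cases[of "s ! Suc j"] by auto
    have "odd (T (take j s))" using par[OF j1] j_def by simp
    then have "T (take j s) \<noteq> 0" by auto
    then have "T (take j s) = -1" using a0 b sb turn_cases[of "s ! j"] by auto
    moreover have "T (drop (Suc j) s) = 1" using tot a0 by simp
    ultimately show ?thesis using j1 n3' j_def n_def by (intro exI[of _ j]) auto
  qed
qed

fun mir :: "gen \<Rightarrow> gen" where
  "mir CapL = CapR" | "mir CapR = CapL" | "mir CupL = CupR" | "mir CupR = CupL"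

lemma mir_cap[simp]: "is_cap (mir g) = is_cap g" by (cases g) auto
lemma mir_turn[simp]: "turn (mir g) = - turn g" by (cases g) auto
lemma T_mir[simp]: "T (map mir s) = - T s" by (induction s) auto
lemma arcseq_mir: "arcseq (map mir s) = arcseq s" unfolding arcseq_def by simp

lemma split_minus:
  assumes as: "arcseq s" and n3: "length s \<ge> 3" and Ts: "T s = -1"
  shows "\<exists>j. odd j \<and> j + 1 < length s \<and> (T (take j s) = 1 \<or> T (take j s) = -1)
            \<and> (T (drop (Suc j) s) = 1 \<or> T (drop (Suc j) s) = -1)"
proof -
  from split_plus[of "map mir s"] as n3 Ts obtain j where
    "odd j" "j + 1 < length s" "T (take j (map mir s)) = 1 \<or> T (take j (map mir s)) = -1"
    "T (drop (Suc j) (map mir s)) = 1 \<or> T (drop (Suc j) (map mir s)) = -1"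
    by (auto simp: arcseq_mir)
  then show ?thesis by (intro exI[of _ j]) (auto simp: take_map drop_map)
qed

lemma arcseq_split:
  assumes "arcseq s" "odd j" "j + 1 < length s"
  shows "arcseq (take j s)" "arcseq (drop (Suc j) s)" "is_cap (s ! j)"
    "s = take j s @ [s ! j] @ drop (Suc j) s"
proof -
  show "arcseq (take j s)" using assms unfolding arcseq_def by auto
  show "arcseq (drop (Suc j) s)" using assms unfolding arcseq_def by auto
  show "is_cap (s ! j)" using assms unfolding arcseq_def by auto
  show "s = take j s @ [s ! j] @ drop (Suc j) s" using assms id_take_nth_drop[of j s] by simp
qed

lemma arc_exists:
  "arcseq s \<Longrightarrow>
    (T s = 1 \<longrightarrow> (\<forall>b. \<exists>A L. arc_ok A b [True, False] b (b + 1) L s)) \<and>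
    (T s = -1 \<longrightarrow> (\<forall>b. \<exists>A L. arc_ok A b [False, True] (b + 1) b L s))"
proof (induction "length s" arbitrary: s rule: less_induct)
  case less
  note as = less.prems
  show ?case
  proof (cases "length s \<ge> 3")
    case False
    have "odd (length s)" using as unfolding arcseq_def by simp
    then have "length s = 1" using False by presburger
    then obtain g where s: "s = [g]" by (cases s) auto
    have "\<not> is_cap g" using as s unfolding arcseq_def by auto
    then show ?thesis using s arc_base_plus arc_base_minus by (cases g) auto
  next
    case True
    have main: "\<exists>j. odd j \<and> j + 1 < length s \<and> (T (take j s) = 1 \<or> T (take j s) = -1)
            \<and> (T (drop (Suc j) s) = 1 \<or> T (drop (Suc j) s) = -1)" if "T s = 1 \<or> T s = -1"
      using that split_plus[OF as True] split_minus[OF as True] by blast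
    show ?thesis
    proof (intro conjI impI allI)
      fix b assume Ts: "T s = 1"
      then obtain j where j: "odd j" "j + 1 < length s" "T (take j s) = 1 \<or> T (take j s) = -1"
        "T (drop (Suc j) s) = 1 \<or> T (drop (Suc j) s) = -1" using main by blast
      define s1 where "s1 = take j s"
      define s2 where "s2 = drop (Suc j) s"
      note sp = arcseq_split[OF as j(1,2)]
      have ih1: "(T s1 = 1 \<longrightarrow> (\<forall>b. \<exists>A L. arc_ok A b [True, False] b (b + 1) L s1)) \<and>
        (T s1 = -1 \<longrightarrow> (\<forall>b. \<exists>A L. arc_ok A b [False, True] (b + 1) b L s1))"
        using less.hyps[of s1] sp j unfolding s1_def by simp
      have ih2: "(T s2 = 1 \<longrightarrow> (\<forall>b. \<exists>A L. arc_ok A b [True, False] b (b + 1) L s2)) \<and>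
        (T s2 = -1 \<longrightarrow> (\<forall>b. \<exists>A L. arc_ok A b [False, True] (b + 1) b L s2))"
        using less.hyps[of s2] sp j unfolding s2_def by simp
      have seq: "s = s1 @ [s ! j] @ s2" using sp unfolding s1_def s2_def by simp
      have sum: "T s1 + turn (s ! j) + T s2 = 1" using Ts seq by (metis T_Cons T_Nil T_append add.right_neutral add.assoc)
      have j3: "T s1 = 1 \<or> T s1 = -1" "T s2 = 1 \<or> T s2 = -1" using j unfolding s1_def s2_def by auto
      show "\<exists>A L. arc_ok A b [True, False] b (b + 1) L s"
      proof (cases "s ! j")
        case CapL
        then have "T s1 = 1" "T s2 = 1" using sum j3 by auto
        then obtain A1 L1 A2 L2 where "arc_ok A1 b [True, False] b (b + 1) L1 s1"
          "arc_ok A2 b [True, False] b (b + 1) L2 s2" using ih1 ih2 by blast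
        from case_a[OF this] show ?thesis using seq CapL by simp
      next
        case CapR
        then have "(T s1 = -1 \<and> T s2 = 1) \<or> (T s1 = 1 \<and> T s2 = -1)" using sum j3 by auto
        then show ?thesis
        proof
          assume h: "T s1 = -1 \<and> T s2 = 1"
          then obtain A1 L1 A2 L2 where "arc_ok A1 (b + 1) [False, True] (b + 1 + 1) (b + 1) L1 s1"
            "arc_ok A2 b [True, False] b (b + 1) L2 s2" using ih1 ih2 by blast
          then have "arc_ok A1 (b + 1) [False, True] (b + 2) (b + 1) L1 s1"
            "arc_ok A2 b [True, False] b (b + 1) L2 s2" by (simp_all add: add.assoc)
          from case_b[OF this] show ?thesis using seq CapR by simp
        next
          assume h: "T s1 = 1 \<and> T s2 = -1"
          then obtain A1 L1 A2 L2 where "arc_ok A1 (b + 1) [False, True] (b + 1 + 1) (b + 1) L1 s2"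
            "arc_ok A2 b [True, False] b (b + 1) L2 s1" using ih1 ih2 by blast
          then have "arc_ok A1 (b + 1) [False, True] (b + 2) (b + 1) L1 s2"
            "arc_ok A2 b [True, False] b (b + 1) L2 s1" by (simp_all add: add.assoc)
          from case_c[OF this] show ?thesis using seq CapR by simp
        qed
      qed (use sp in auto)
    next
      fix b assume Ts: "T s = -1"
      then obtain j where j: "odd j" "j + 1 < length s" "T (take j s) = 1 \<or> T (take j s) = -1"
        "T (drop (Suc j) s) = 1 \<or> T (drop (Suc j) s) = -1" using main by blast
      define s1 where "s1 = take j s"
      define s2 where "s2 = drop (Suc j) s"
      note sp = arcseq_split[OF as j(1,2)]
      have ih1: "(T s1 = 1 \<longrightarrow> (\<forall>b. \<exists>A L. arc_ok A b [True, False] b (b + 1) L s1)) \<and>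
        (T s1 = -1 \<longrightarrow> (\<forall>b. \<exists>A L. arc_ok A b [False, True] (b + 1) b L s1))"
        using less.hyps[of s1] sp j unfolding s1_def by simp
      have ih2: "(T s2 = 1 \<longrightarrow> (\<forall>b. \<exists>A L. arc_ok A b [True, False] b (b + 1) L s2)) \<and>
        (T s2 = -1 \<longrightarrow> (\<forall>b. \<exists>A L. arc_ok A b [False, True] (b + 1) b L s2))"
        using less.hyps[of s2] sp j unfolding s2_def by simp
      have seq: "s = s1 @ [s ! j] @ s2" using sp unfolding s1_def s2_def by simp
      have sum: "T s1 + turn (s ! j) + T s2 = -1" using Ts seq by (metis T_Cons T_Nil T_append add.right_neutral add.assoc)
      have j3: "T s1 = 1 \<or> T s1 = -1" "T s2 = 1 \<or> T s2 = -1" using j unfolding s1_def s2_def by auto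
      show "\<exists>A L. arc_ok A b [False, True] (b + 1) b L s"
      proof (cases "s ! j")
        case CapR
        then have "T s1 = -1" "T s2 = -1" using sum j3 by auto
        then obtain A1 L1 A2 L2 where "arc_ok A1 (b + 2) [False, True] (b + 2 + 1) (b + 2) L1 s1"
          "arc_ok A2 b [False, True] (b + 1) b L2 s2" using ih1 ih2 by blast
        then have "arc_ok A1 (b + 2) [False, True] (b + 3) (b + 2) L1 s1"
          "arc_ok A2 b [False, True] (b + 1) b L2 s2" by (simp_all add: add.assoc numeral_3_eq_3)
        from case_a'[OF this] show ?thesis using seq CapR by simp
      next
        case CapL
        then have "(T s1 = 1 \<and> T s2 = -1) \<or> (T s1 = -1 \<and> T s2 = 1)" using sum j3 by auto
        then show ?thesis
        proof
          assume h: "T s1 = 1 \<and> T s2 = -1"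
          then obtain A1 L1 A2 L2 where "arc_ok A1 (b + 1) [True, False] (b + 1) (b + 1 + 1) L1 s1"
            "arc_ok A2 b [False, True] (b + 1) b L2 s2" using ih1 ih2 by blast
          then have "arc_ok A1 (b + 1) [True, False] (b + 1) (b + 2) L1 s1"
            "arc_ok A2 b [False, True] (b + 1) b L2 s2" by (simp_all add: add.assoc)
          from case_b'[OF this] show ?thesis using seq CapL by simp
        next
          assume h: "T s1 = -1 \<and> T s2 = 1"
          then obtain A1 L1 A2 L2 where "arc_ok A1 (b + 1) [True, False] (b + 1) (b + 1 + 1) L1 s2"
            "arc_ok A2 b [False, True] (b + 1) b L2 s1" using ih1 ih2 by blast
          then have "arc_ok A1 (b + 1) [True, False] (b + 1) (b + 2) L1 s2"
            "arc_ok A2 b [False, True] (b + 1) b L2 s1" by (simp_all add: add.assoc)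
          from case_c'[OF this] show ?thesis using seq CapL by simp
        qed
      qed (use sp in auto)
    qed
  qed
qed

lemma successively_nth:
  "successively P xs \<Longrightarrow> Suc i < length xs \<Longrightarrow> P (xs ! i) (xs ! Suc i)"
proof (induction P xs arbitrary: i rule: successively.induct)
  case (3 P x y xs)
  then show ?case by (cases i) auto
qed auto

lemma plusSuc0: "((+) (Suc 0)) = Suc" "((+) (1::nat)) = Suc" by (auto simp: fun_eq_iff)

lemma in_set_nth_ex: "x \<in> set xs \<Longrightarrow> \<exists>m < length xs. xs ! m = x"
  by (simp add: in_set_conv_nth)

lemma map_upt_nth: "map (\<lambda>m. f (xs ! m)) [0..<length xs] = map f xs"
  by (rule nth_equalityI) auto

lemma knot_from_arc:
  assumes a: "arc_ok A 0 (gcod g) (uleg (0, g)) eout L s" and g: "is_cap g"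
  shows "knot ((0, g) # A) \<and> ccc_list ((0, g) # A) = g # s"
proof -
  let ?D = "(0, g) # A"
  let ?M = "0 # map Suc L"
  from a have L: "length L = length A" "set L = {..<length A}" "L \<noteq> []"
    "trace upa A (uleg (0, g)) = Some (hd L)" "successively (\<lambda>x y. step A x = Some y) L"
    "map (\<lambda>i. snd (A ! i)) L = s" "\<forall>u v. length u = 0 \<longrightarrow> apply_diag A (u @ gcod g @ v) = Some (u @ v)"
    unfolding arc_ok_def by auto
  have s0: "step ?D 0 = Some (1 + hd L)" using L(4) g unfolding step_def by simp
  have s1: "successively (\<lambda>x y. step ?D x = Some y) (map Suc L)"
    using succ_shift[OF L(5), of "[(0, g)]" "[]"] L(2) by (simp add: plusSuc0)
  have succ: "successively (\<lambda>x y. step ?D x = Some y) ?M"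
    using s0 s1 L(3) by (simp add: successively_Cons hd_map)
  have lenM: "length ?M = length ?D" using L(1) by simp
  have orb: "m < length ?M \<Longrightarrow> (next_gen ?D ^^ m) 0 = ?M ! m" for m
  proof (induction m)
    case (Suc m)
    have "step ?D (?M ! m) = Some (?M ! Suc m)" using successively_nth[OF succ Suc.prems] .
    then have n: "next_gen ?D (?M ! m) = ?M ! Suc m" by (rule step_next)
    have "(next_gen ?D ^^ Suc m) 0 = next_gen ?D ((next_gen ?D ^^ m) 0)" by simp
    also have "\<dots> = next_gen ?D (?M ! m)" using Suc by simp
    finally show ?case using n by simp
  qed simp
  have setM: "set ?M = {..<length ?D}"
  proof -
    have "set ?M = insert 0 (((+) 1) ` {..<length A})" using L(2) by (simp add: plusSuc0)
    also have "\<dots> = {..<Suc (length A)}"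
      using set_shift3[of "length A" 0] by auto
    finally show ?thesis by simp
  qed
  have endo: "endo_I ?D"
  proof -
    have "apply_layer (0, g) [] = Some (gcod g)" using g by (cases g) auto
    moreover have "apply_diag A (gcod g) = Some []" using L(7) by (metis append_Nil append_Nil2 list.size(3))
    ultimately show ?thesis unfolding endo_I_def by simp
  qed
  have reach: "\<forall>j < length ?D. \<exists>m. (next_gen ?D ^^ m) 0 = j"
  proof (intro allI impI)
    fix j assume "j < length ?D"
    then have "j \<in> set ?M" using setM by simp
    then obtain m where "m < length ?M" "?M ! m = j" using in_set_nth_ex[of j ?M] by blast
    then show "\<exists>m. (next_gen ?D ^^ m) 0 = j" using orb by blast
  qed
  have "ccc_list ?D = map (\<lambda>m. snd (?D ! (?M ! m))) [0..<length ?M]"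
    unfolding ccc_list_def using orb lenM by (intro map_cong) auto
  also have "\<dots> = map (\<lambda>i. snd (?D ! i)) ?M"
    by (rule map_upt_nth)
  also have "\<dots> = g # s"
    using map_shift[of L A "[(0, g)]" "[]"] L(2,6) by (simp add: plusSuc0)
  finally show ?thesis using endo reach unfolding knot_def by simp
qed

lemma cyc_alt:
  assumes cc: "cap_cup_cycle c" and i: "i < length c" and ic: "is_cap (c ! i)"
  shows "is_cap (c ! ((i + m) mod length c)) \<longleftrightarrow> even m"
proof (induction m)
  case 0
  then show ?case using i ic by simp
next
  case (Suc m)
  have n: "length c > 0" using i by linarith
  have k: "(i + m) mod length c < length c" using n by simp
  have e: "(i + Suc m) mod length c = Suc ((i + m) mod length c) mod length c"
    by (simp add: mod_Suc_eq)
  have "is_cap (c ! ((i + m) mod length c)) \<longleftrightarrow> \<not> is_cap (c ! (((i + m) mod length c + 1) mod length c))"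
    using cc k unfolding cap_cup_cycle_def by blast
  then show ?case using Suc e by simp
qed

lemma T_rotate: "T (rotate i c) = T c"
proof -
  have "T c = T (take (i mod length c) c) + T (drop (i mod length c) c)"
    by (metis T_append append_take_drop_id)
  then show ?thesis by (simp add: rotate_drop_take)
qed

lemma rot_alt:
  assumes cc: "cap_cup_cycle c" and i: "i < length c" and ic: "is_cap (c ! i)"
  shows "\<forall>m < length c. is_cap (rotate i c ! m) \<longleftrightarrow> even m" "even (length c)"
proof -
  show "\<forall>m < length c. is_cap (rotate i c ! m) \<longleftrightarrow> even m"
    using cyc_alt[OF assms] by (simp add: nth_rotate)
  have "is_cap (c ! ((i + length c) mod length c)) \<longleftrightarrow> even (length c)" using cyc_alt[OF assms] .
  then show "even (length c)" using i ic by simp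
qed

lemma rot_seq:
  assumes cc: "cap_cup_cycle c" and i: "i < length c" and ic: "is_cap (c ! i)"
  shows "rotate i c = c ! i # tl (rotate i c)" "arcseq (tl (rotate i c))"
    "T (tl (rotate i c)) = T c - turn (c ! i)"
proof -
  note ra = rot_alt[OF assms]
  have ne: "rotate i c \<noteq> []" using i by (metis length_rotate list.size(3) not_less0)
  have i0: "0 < length c" using i by linarith
  have h: "rotate i c ! 0 = c ! i" using nth_rotate[OF i0, of i] i by simp
  show r: "rotate i c = c ! i # tl (rotate i c)" using ne h by (cases "rotate i c") auto
  have n2: "length c \<ge> 2" using ra(2) i by presburger
  show "arcseq (tl (rotate i c))"
    unfolding arcseq_def using ra n2 by (auto simp: nth_tl)
  have "T (rotate i c) = turn (c ! i) + T (tl (rotate i c))" by (subst r) simp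
  then show "T (tl (rotate i c)) = T c - turn (c ! i)" using T_rotate by simp
qed

lemma T_le: "(\<forall>m<length r. is_cap (r ! m) \<longleftrightarrow> even m) \<Longrightarrow> CapR \<notin> set r \<Longrightarrow> T r \<le> 0"
proof (induction r rule: induct_list012)
  case (2 x)
  then have "is_cap x" by auto
  then show ?case using 2 by (cases x) auto
next
  case (3 x y zs)
  have x: "is_cap x" using "3.prems"(1) by auto
  then have "x = CapL" using "3.prems"(2) by (cases x) auto
  moreover have "\<forall>m<length zs. is_cap (zs ! m) \<longleftrightarrow> even m"
  proof (intro allI impI)
    fix m assume "m < length zs"
    then show "is_cap (zs ! m) \<longleftrightarrow> even m" using "3.prems"(1)[rule_format, of "Suc (Suc m)"] by simp
  qed
  then have "T zs \<le> 0" using "3.IH"(1) "3.prems"(2) by simp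
  moreover have "turn y \<le> 1" using turn_cases[of y] by auto
  ultimately show ?case by simp
qed simp

lemma exists_CapR:
  assumes cc: "cap_cup_cycle c" and T2: "T c = 2"
  shows "\<exists>i < length c. c ! i = CapR"
proof (rule ccontr)
  assume no: "\<not> (\<exists>i < length c. c ! i = CapR)"
  have ne: "c \<noteq> []" using T2 by auto
  obtain i0 where i0: "i0 < length c" "is_cap (c ! i0)"
  proof (cases "is_cap (c ! 0)")
    case True
    then show ?thesis using that ne by auto
  next
    case False
    have "is_cap (c ! ((0 + 1) mod length c))" using cc ne False unfolding cap_cup_cycle_def by auto
    moreover have "(0 + 1) mod length c < length c" using ne by (intro mod_less_divisor) simp
    ultimately show ?thesis using that by blast
  qed
  have "CapR \<notin> set (rotate i0 c)" using no by (auto simp: in_set_conv_nth)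
  then have "T (rotate i0 c) \<le> 0" using T_le rot_alt(1)[OF cc i0] by simp
  then show False using T_rotate T2 by simp
qed

lemma exists_CapL:
  assumes cc: "cap_cup_cycle c" and T2: "T c = -2"
  shows "\<exists>i < length c. c ! i = CapL"
proof -
  have "cap_cup_cycle (map mir c)" unfolding cap_cup_cycle_def
  proof (intro allI impI)
    fix i assume i: "i < length (map mir c)"
    then have k: "(i + 1) mod length c < length c" by (intro mod_less_divisor) (metis length_map gr_zeroI less_zeroE)
    have "is_cap (c ! i) \<longleftrightarrow> \<not> is_cap (c ! ((i + 1) mod length c))"
      using cc i unfolding cap_cup_cycle_def by simp
    then show "is_cap (map mir c ! i) \<longleftrightarrow> \<not> is_cap (map mir c ! ((i + 1) mod length (map mir c)))"
      using i k by simp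
  qed
  moreover have "T (map mir c) = 2" using T2 by simp
  ultimately obtain i where "i < length c" "mir (c ! i) = CapR" using exists_CapR by fastforce
  then show ?thesis by (intro exI[of _ i]) (cases "c ! i"; auto)
qed

lemma final:
  assumes cc: "cap_cup_cycle c" and i: "i < length c" and g: "c ! i = g" "is_cap g"
    and a: "arc_ok A 0 (gcod g) (uleg (0, g)) eout L (tl (rotate i c))"
  shows "\<exists>d :: layer list. knot d \<and> ccc_eq d c"
proof -
  have k: "knot ((0, g) # A)" "ccc_list ((0, g) # A) = g # tl (rotate i c)"
    using knot_from_arc[OF a g(2)] by auto
  have r: "g # tl (rotate i c) = rotate i c" using rot_seq(1)[OF cc i] g by simp
  have "rotate (length c - i) (rotate i c) = c"
    using i by (simp add: rotate_rotate)
  then have "ccc_eq ((0, g) # A) c" unfolding ccc_eq_def k(2) r by blast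
  then show ?thesis using k(1) by blast
qed

theorem mainTheorem3:
  fixes c :: "gen list"
  assumes "cap_cup_cycle c" and "T c = 2 \<or> T c = -2"
  shows "\<exists>d :: layer list. knot d \<and> ccc_eq d c"
  using assms(2)
proof
  assume T2: "T c = 2"
  obtain i where i: "i < length c" "c ! i = CapR" using exists_CapR[OF assms(1) T2] by blast
  note rs = rot_seq[OF assms(1) i(1)] 
  have "arcseq (tl (rotate i c))" "T (tl (rotate i c)) = 1" using rs i T2 by simp_all
  then obtain A L where "arc_ok A 0 [True, False] 0 (0 + 1) L (tl (rotate i c))"
    using arc_exists by blast
  then have "arc_ok A 0 (gcod CapR) (uleg (0, CapR)) 1 L (tl (rotate i c))" by simp
  then show ?thesis using final[OF assms(1) i] by simp
next
  assume T2: "T c = -2"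
  obtain i where i: "i < length c" "c ! i = CapL" using exists_CapL[OF assms(1) T2] by blast
  note rs = rot_seq[OF assms(1) i(1)] 
  have "arcseq (tl (rotate i c))" "T (tl (rotate i c)) = -1" using rs i T2 by simp_all
  then obtain A L where "arc_ok A 0 [False, True] (0 + 1) 0 L (tl (rotate i c))"
    using arc_exists by blast
  then have "arc_ok A 0 (gcod CapL) (uleg (0, CapL)) 0 L (tl (rotate i c))" by simp
  then show ?thesis using final[OF assms(1) i] by simp
qed

end
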